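(* Let $\Bbbk$ be a commutative ring of global dimension zero, $C$ a $\Bbbk$-coalgebra with comultiplication $\Delta$, and $M$ a right $C$-comodule that is finitely generated as a $\Bbbk$-module, with coaction $\rho\colon M\to M\otimes C$. The $\Bbbk$-linear map $\mathrm{tr}^C\colon\mathrm{End}_C(M)\to C$, $\mathrm{tr}^C(f)=\mathrm{tr}(\rho\circ f)$, is a cotrace, i.e. $\Delta(\mathrm{tr}^C(f))=\tau(\Delta(\mathrm{tr}^C(f)))$ for all $f\in\mathrm{End}_C(M)$. In particular $\mathrm{tr}^C$ factors uniquely through the inclusion $\mathrm{coHH}_0(C)\hookrightarrow C$.
   Context: $\tau$ is the swap $C\otimes C\to C\otimes C$. $\mathrm{End}_C(M)$ is the $\Bbbk$-module of right $C$-colinear endomorphisms. $\mathrm{coHH}_0(C)=\ker(\Delta-\tau\circ\Delta)$. For a $\Bbbk$-linear $g\colon M\to M\otimes C$, its twisted trace is $\mathrm{tr}(g)=\sum_i (e_i^*\otimes\mathrm{id}_C)(g(e_i))\in C$ for a $\Bbbk$-basis $(e_i)$ of $M$ with dual basis $(e_i^* )$; thus $\mathrm{tr}^C(f)=\sum_i\sum e_i^*(f(e_{i(0)}))e_{i(1)}$ in Sweedler notation $\rho(m)=\sum m_{(0)}\otimes m_{(1)}$. *)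

theory Defs
  imports Main "HOL.Modules" "HOL-Library.Function_Algebras"
begin

text \<open>A commutative ring has global dimension zero iff it is semisimple, i.e. every
  ideal is a direct summand of the ring.  Ideals are the submodules of the ring
  regarded as a module over itself.\<close>

definition gldim_zero :: "'k::comm_ring_1 itself \<Rightarrow> bool" where
  "gldim_zero _ \<longleftrightarrow>
     (\<forall>I::'k set. module.subspace (*) I \<longrightarrow>
        (\<exists>J. module.subspace (*) J \<and> I \<inter> J = {0} \<and> (\<forall>x. \<exists>a\<in>I. \<exists>b\<in>J. x = a + b)))"

section \<open>Tensor products (as the quotient of the free module by the bilinearity relations)\<close>

definition free_scale :: "'k::comm_ring_1 \<Rightarrow> ('a \<Rightarrow> 'k) \<Rightarrow> ('a \<Rightarrow> 'k)" where
  "free_scale c \<phi> = (\<lambda>x. c * \<phi> x)"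

definition fdelta :: "'a \<Rightarrow> 'a \<Rightarrow> 'k::comm_ring_1" where
  "fdelta p = (\<lambda>x. if x = p then 1 else 0)"

definition bil_rel ::
  "('k::comm_ring_1 \<Rightarrow> 'm::ab_group_add \<Rightarrow> 'm) \<Rightarrow> ('k \<Rightarrow> 'n::ab_group_add \<Rightarrow> 'n)
   \<Rightarrow> ('m \<times> 'n \<Rightarrow> 'k) set" where
  "bil_rel sM sN =
     {fdelta (m + m', n) - fdelta (m, n) - fdelta (m', n) | m m' n. True}
   \<union> {fdelta (m, n + n') - fdelta (m, n) - fdelta (m, n') | m n n'. True}
   \<union> {fdelta (sM c m, n) - free_scale c (fdelta (m, n)) | c m n. True}
   \<union> {fdelta (m, sN c n) - free_scale c (fdelta (m, n)) | c m n. True}"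

definition free_lift ::
  "('k::comm_ring_1 \<Rightarrow> 't::ab_group_add \<Rightarrow> 't) \<Rightarrow> ('m \<Rightarrow> 'n \<Rightarrow> 't) \<Rightarrow> ('m \<times> 'n \<Rightarrow> 'k) \<Rightarrow> 't" where
  "free_lift sT t \<phi> = (\<Sum>p\<in>{p. \<phi> p \<noteq> 0}. sT (\<phi> p) (t (fst p) (snd p)))"

text \<open>is_tensor sM sN sT t: the module T (scalar action sT) together with the
  bilinear map t is a tensor product of M and N, i.e. the induced map from the free
  module on M x N onto T is surjective with kernel the span of the bilinearity relations.\<close>

definition is_tensor ::
  "('k::comm_ring_1 \<Rightarrow> 'm::ab_group_add \<Rightarrow> 'm) \<Rightarrow> ('k \<Rightarrow> 'n::ab_group_add \<Rightarrow> 'n)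
   \<Rightarrow> ('k \<Rightarrow> 't::ab_group_add \<Rightarrow> 't) \<Rightarrow> ('m \<Rightarrow> 'n \<Rightarrow> 't) \<Rightarrow> bool" where
  "is_tensor sM sN sT t \<longleftrightarrow>
     module sM \<and> module sN \<and> module sT \<and>
     (\<forall>n. module_hom sM sT (\<lambda>m. t m n)) \<and> (\<forall>m. module_hom sN sT (t m)) \<and>
     (\<forall>x. \<exists>\<phi>. finite {p. \<phi> p \<noteq> 0} \<and> x = free_lift sT t \<phi>) \<and>
     (\<forall>\<phi>. finite {p. \<phi> p \<noteq> 0} \<and> free_lift sT t \<phi> = 0 \<longrightarrow>
           \<phi> \<in> module.span free_scale (bil_rel sM sN))"

definition tlift ::
  "('k::comm_ring_1 \<Rightarrow> 't::ab_group_add \<Rightarrow> 't) \<Rightarrow> ('m \<Rightarrow> 'n \<Rightarrow> 't)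
   \<Rightarrow> ('k \<Rightarrow> 'u::ab_group_add \<Rightarrow> 'u) \<Rightarrow> ('m \<Rightarrow> 'n \<Rightarrow> 'u) \<Rightarrow> 't \<Rightarrow> 'u" where
  "tlift sT t sU b = (THE h. module_hom sT sU h \<and> (\<forall>x y. h (t x y) = b x y))"

definition tassoc where
  "tassoc sAB_C tAB_C sAB tAB sA_BC tA_BC tBC =
     tlift sAB_C tAB_C sA_BC (\<lambda>u z. tlift sAB tAB sA_BC (\<lambda>x y. tA_BC x (tBC y z)) u)"

text \<open>Parameters: C (scalar action sC); C\<otimes>C (sCC, tCC); (C\<otimes>C)\<otimes>C (sCC_C, tCC_C);
  C\<otimes>(C\<otimes>C) (sC_CC, tC_CC); comultiplication \<Delta>, counit \<epsilon>.\<close>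

definition coalgebra where
  "coalgebra sC sCC tCC sCC_C tCC_C sC_CC tC_CC \<Delta> \<epsilon> \<longleftrightarrow>
     is_tensor sC sC sCC tCC \<and> is_tensor sCC sC sCC_C tCC_C \<and> is_tensor sC sCC sC_CC tC_CC \<and>
     module_hom sC sCC \<Delta> \<and> module_hom sC (*) \<epsilon> \<and>
     (\<forall>c. tassoc sCC_C tCC_C sCC tCC sC_CC tC_CC tCC
            (tlift sCC tCC sCC_C (\<lambda>x y. tCC_C (\<Delta> x) y) (\<Delta> c))
          = tlift sCC tCC sC_CC (\<lambda>x y. tC_CC x (\<Delta> y)) (\<Delta> c)) \<and>
     (\<forall>c. tlift sCC tCC sC (\<lambda>x y. sC (\<epsilon> x) y) (\<Delta> c) = c) \<and>
     (\<forall>c. tlift sCC tCC sC (\<lambda>x y. sC (\<epsilon> y) x) (\<Delta> c) = c)"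

text \<open>Right comodule M (sM) with M\<otimes>C (sMC, tMC), (M\<otimes>C)\<otimes>C (sMC_C, tMC_C),
  M\<otimes>(C\<otimes>C) (sM_CC, tM_CC), coaction \<rho>.\<close>

definition right_comodule where
  "right_comodule sC sCC tCC \<Delta> \<epsilon> sM sMC tMC sMC_C tMC_C sM_CC tM_CC \<rho> \<longleftrightarrow>
     is_tensor sM sC sMC tMC \<and> is_tensor sMC sC sMC_C tMC_C \<and> is_tensor sM sCC sM_CC tM_CC \<and>
     module_hom sM sMC \<rho> \<and>
     (\<forall>m. tassoc sMC_C tMC_C sMC tMC sM_CC tM_CC tCC
            (tlift sMC tMC sMC_C (\<lambda>x y. tMC_C (\<rho> x) y) (\<rho> m))
          = tlift sMC tMC sM_CC (\<lambda>x y. tM_CC x (\<Delta> y)) (\<rho> m)) \<and>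
     (\<forall>m. tlift sMC tMC sM (\<lambda>x y. sM (\<epsilon> y) x) (\<rho> m) = m)"

definition colinear where
  "colinear sM sMC tMC \<rho> f \<longleftrightarrow>
     module_hom sM sM f \<and> (\<forall>m. \<rho> (f m) = tlift sMC tMC sMC (\<lambda>x c. tMC (f x) c) (\<rho> m))"

definition finitely_generated where
  "finitely_generated sM \<longleftrightarrow> (\<exists>S. finite S \<and> module.span sM S = UNIV)"

definition dual_basis ::
  "('k::comm_ring_1 \<Rightarrow> 'm::ab_group_add \<Rightarrow> 'm) \<Rightarrow> nat \<Rightarrow> (nat \<Rightarrow> 'm) \<Rightarrow> (nat \<Rightarrow> 'm \<Rightarrow> 'k) \<Rightarrow> bool" where
  "dual_basis sM n e \<phi> \<longleftrightarrow>
     (\<forall>i<n. module_hom sM (*) (\<phi> i)) \<and> (\<forall>m. m = (\<Sum>i<n. sM (\<phi> i m) (e i)))"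

definition twisted_trace where
  "twisted_trace sM sMC tMC sC g =
     (SOME x. \<exists>n e \<phi>. dual_basis sM n e \<phi> \<and>
        x = (\<Sum>i<n. tlift sMC tMC sC (\<lambda>m c. sC (\<phi> i m) c) (g (e i))))"

definition trC where
  "trC sM sMC tMC sC \<rho> f = twisted_trace sM sMC tMC sC (\<lambda>m. \<rho> (f m))"

definition tswap where
  "tswap sCC tCC = tlift sCC tCC sCC (\<lambda>x y. tCC y x)"

definition coHH0 where
  "coHH0 sCC tCC \<Delta> = {c. \<Delta> c - tswap sCC tCC (\<Delta> c) = 0}"

end

theory Submission
  imports Defs
begin

lemma module_ring: "module ((*) :: 'k::comm_ring_1 \<Rightarrow> 'k \<Rightarrow> 'k)"
  by unfold_locales (auto simp: algebra_simps)

lemma module_free: "module (free_scale :: 'k::comm_ring_1 \<Rightarrow> ('a \<Rightarrow> 'k) \<Rightarrow> _)"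
  by unfold_locales (auto simp: free_scale_def fun_eq_iff algebra_simps)

lemma fl_on:
  assumes U: "module sU" and F: "finite F" "{p. \<phi> p \<noteq> 0} \<subseteq> F"
  shows "free_lift sU b \<phi> = (\<Sum>p\<in>F. sU (\<phi> p) (b (fst p) (snd p)))"
  unfolding free_lift_def
  by (rule sum.mono_neutral_left) (use F in \<open>auto simp: module.scale_zero_left[OF U] intro: finite_subset\<close>)

lemma fl_add:
  assumes U: "module sU" and f: "finite {p. \<phi> p \<noteq> 0}" "finite {p. \<psi> p \<noteq> 0}"
  shows "free_lift sU b (\<phi> + \<psi>) = free_lift sU b \<phi> + free_lift sU b \<psi>"
proof -
  let ?F = "{p. \<phi> p \<noteq> 0} \<union> {p. \<psi> p \<noteq> 0}"
  have "free_lift sU b (\<phi> + \<psi>) = (\<Sum>p\<in>?F. sU ((\<phi>+\<psi>) p) (b (fst p) (snd p)))"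
    by (rule fl_on[OF U]) (use f in auto)
  also have "\<dots> = (\<Sum>p\<in>?F. sU (\<phi> p) (b (fst p) (snd p))) + (\<Sum>p\<in>?F. sU (\<psi> p) (b (fst p) (snd p)))"
    by (simp add: module.scale_left_distrib[OF U] sum.distrib)
  also have "\<dots> = free_lift sU b \<phi> + free_lift sU b \<psi>"
    using fl_on[OF U, of ?F \<phi> b] fl_on[OF U, of ?F \<psi> b] f by auto
  finally show ?thesis .
qed

lemma fsupp_add: "finite {p. \<phi> p \<noteq> 0} \<Longrightarrow> finite {p. \<psi> p \<noteq> 0} \<Longrightarrow> finite {p. (\<phi> + \<psi>) p \<noteq> (0::'k::comm_ring_1)}"
  by (rule finite_subset[of _ "{p. \<phi> p \<noteq> 0} \<union> {p. \<psi> p \<noteq> 0}"]) auto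

lemma fsupp_scale: "finite {p. \<phi> p \<noteq> 0} \<Longrightarrow> finite {p. free_scale c \<phi> p \<noteq> (0::'k::comm_ring_1)}"
  by (rule finite_subset[of _ "{p. \<phi> p \<noteq> 0}"]) (auto simp: free_scale_def)

lemma fsupp_fdelta: "finite {p. fdelta q p \<noteq> (0::'k::comm_ring_1)}"
  by (rule finite_subset[of _ "{q}"]) (auto simp: fdelta_def)

lemma fl_scale:
  assumes U: "module sU" and f: "finite {p. \<phi> p \<noteq> 0}"
  shows "free_lift sU b (free_scale c \<phi>) = sU c (free_lift sU b \<phi>)"
proof -
  have "free_lift sU b (free_scale c \<phi>) = (\<Sum>p\<in>{p. \<phi> p \<noteq> 0}. sU (free_scale c \<phi> p) (b (fst p) (snd p)))"
    by (rule fl_on[OF U f]) (auto simp: free_scale_def)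
  also have "\<dots> = sU c (free_lift sU b \<phi>)"
    unfolding free_lift_def free_scale_def
    by (simp add: module.scale_sum_right[OF U] module.scale_scale[OF U])
  finally show ?thesis .
qed

lemma fl_fdelta:
  assumes U: "module sU"
  shows "free_lift sU b (fdelta q) = b (fst q) (snd q)"
proof -
  have "free_lift sU b (fdelta q) = (\<Sum>p\<in>{q}. sU (fdelta q p) (b (fst p) (snd p)))"
    by (rule fl_on[OF U]) (auto simp: fdelta_def)
  then show ?thesis by (simp add: fdelta_def module.scale_one[OF U])
qed

lemma fl_neg:
  assumes U: "module sU" and f: "finite {p. \<phi> p \<noteq> 0}"
  shows "free_lift sU b (- \<phi>) = - free_lift sU b \<phi>"
proof -
  have "- \<phi> = free_scale (-1) \<phi>" by (auto simp: free_scale_def)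
  then show ?thesis using fl_scale[OF U f, of b "-1"] by (simp add: module.scale_minus_left[OF U] module.scale_one[OF U])
qed

lemma fl_diff:
  assumes U: "module sU" and f: "finite {p. \<phi> p \<noteq> 0}" "finite {p. \<psi> p \<noteq> 0}"
  shows "free_lift sU b (\<phi> - \<psi>) = free_lift sU b \<phi> - free_lift sU b \<psi>"
proof -
  have f2: "finite {p. (- \<psi>) p \<noteq> 0}" using f(2) by simp
  have "free_lift sU b (\<phi> - \<psi>) = free_lift sU b (\<phi> + (- \<psi>))" by (simp only: diff_conv_add_uminus)
  also have "\<dots> = free_lift sU b \<phi> + free_lift sU b (- \<psi>)" by (rule fl_add[OF U f(1) f2])
  also have "\<dots> = free_lift sU b \<phi> - free_lift sU b \<psi>" by (simp only: fl_neg[OF U f(2)] diff_conv_add_uminus)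
  finally show ?thesis .
qed

lemma span_fsupp:
  assumes "\<phi> \<in> module.span free_scale S" "\<And>\<psi>. \<psi> \<in> S \<Longrightarrow> finite {p. \<psi> p \<noteq> 0}"
  shows "finite {p. \<phi> p \<noteq> (0::'k::comm_ring_1)}"
proof -
  interpret F: module "free_scale :: 'k \<Rightarrow> ('a \<Rightarrow> 'k) \<Rightarrow> _" by (rule module_free)
  show ?thesis using assms(1)
  proof (induct rule: F.span_induct_alt)
    case base show ?case by simp
  next
    case (step c x y) then show ?case using assms(2) by (metis fsupp_add fsupp_scale)
  qed
qed

definition bilin where
  "bilin sA sB sU b \<longleftrightarrow> (\<forall>y. module_hom sA sU (\<lambda>x. b x y)) \<and> (\<forall>x. module_hom sB sU (b x))"

lemma fsupp_diff: "finite {p. \<phi> p \<noteq> 0} \<Longrightarrow> finite {p. \<psi> p \<noteq> 0} \<Longrightarrow> finite {p. (\<phi> - \<psi>) p \<noteq> (0::'k::comm_ring_1)}"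
  by (rule finite_subset[of _ "{p. \<phi> p \<noteq> 0} \<union> {p. \<psi> p \<noteq> 0}"]) auto

lemma fl_bilrel:
  fixes sA :: "'k::comm_ring_1 \<Rightarrow> 'a::ab_group_add \<Rightarrow> 'a" and sB :: "'k \<Rightarrow> 'b::ab_group_add \<Rightarrow> 'b"
    and sU :: "'k \<Rightarrow> 'u::ab_group_add \<Rightarrow> 'u"
  assumes U: "module sU" and b: "bilin sA sB sU b" and phi: "\<phi> \<in> module.span free_scale (bil_rel sA sB)"
  shows "free_lift sU b \<phi> = 0"
proof -
  interpret F: module "free_scale :: 'k \<Rightarrow> ('a \<times> 'b \<Rightarrow> 'k) \<Rightarrow> _" by (rule module_free)
  note fd = fsupp_fdelta
  note fl = fl_diff[OF U] fl_fdelta[OF U] fl_scale[OF U]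
  let ?Z = "{\<phi>. finite {p. \<phi> p \<noteq> 0} \<and> free_lift sU b \<phi> = 0}"
  have sub: "F.subspace ?Z"
    unfolding F.subspace_def
  proof (intro conjI ballI allI)
    show "0 \<in> ?Z" by (simp add: free_lift_def)
  next
    fix x y assume "x \<in> ?Z" "y \<in> ?Z" then show "x + y \<in> ?Z"
      using fsupp_add[of x y] by (auto simp: fl_add[OF U])
  next
    fix c x assume "x \<in> ?Z" then show "free_scale c x \<in> ?Z"
      by (auto simp: fl_scale[OF U] module.scale_zero_right[OF U] intro: fsupp_scale)
  qed
  have b1: "\<And>y. module_hom sA sU (\<lambda>x. b x y)" and b2: "\<And>x. module_hom sB sU (b x)"
    using b by (auto simp: bilin_def)
  have "bil_rel sA sB \<subseteq> ?Z"
  proof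
    fix \<psi> assume "\<psi> \<in> bil_rel sA sB"
    then consider (a) m m' n where "\<psi> = fdelta (m + m', n) - fdelta (m, n) - fdelta (m', n)"
      | (b) m n n' where "\<psi> = fdelta (m, n + n') - fdelta (m, n) - fdelta (m, n')"
      | (c) c m n where "\<psi> = fdelta (sA c m, n) - free_scale c (fdelta (m, n))"
      | (d) c m n where "\<psi> = fdelta (m, sB c n) - free_scale c (fdelta (m, n))"
      unfolding bil_rel_def by blast
    then show "\<psi> \<in> ?Z"
    proof cases
      case a
      have f1: "finite {p. (fdelta (m+m',n) - fdelta (m,n)) p \<noteq> (0::'k)}" by (intro fsupp_diff fd)
      have "free_lift sU b \<psi> = b (m+m') n - b m n - b m' n" unfolding a
        by (simp only: fl_diff[OF U f1 fd] fl_diff[OF U fd fd] fl_fdelta[OF U] fst_conv snd_conv)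
      moreover have "finite {p. \<psi> p \<noteq> 0}" unfolding a by (rule fsupp_diff[OF f1 fd])
      ultimately show ?thesis by (simp add: module_hom.add[OF b1])
    next
      case b
      have f1: "finite {p. (fdelta (m,n+n') - fdelta (m,n)) p \<noteq> (0::'k)}" by (intro fsupp_diff fd)
      have "free_lift sU b \<psi> = b m (n+n') - b m n - b m n'" unfolding b
        by (simp only: fl_diff[OF U f1 fd] fl_diff[OF U fd fd] fl_fdelta[OF U] fst_conv snd_conv)
      moreover have "finite {p. \<psi> p \<noteq> 0}" unfolding b by (rule fsupp_diff[OF f1 fd])
      ultimately show ?thesis by (simp add: module_hom.add[OF b2])
    next
      case c
      have f1: "finite {p. free_scale c (fdelta (m,n)) p \<noteq> (0::'k)}" by (intro fsupp_scale fd)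
      have "free_lift sU b \<psi> = b (sA c m) n - sU c (b m n)" unfolding c
        by (simp only: fl_diff[OF U fd f1] fl_scale[OF U fd] fl_fdelta[OF U] fst_conv snd_conv)
      moreover have "finite {p. \<psi> p \<noteq> 0}" unfolding c by (rule fsupp_diff[OF fd f1])
      ultimately show ?thesis by (simp add: module_hom.scale[OF b1])
    next
      case d
      have f1: "finite {p. free_scale c (fdelta (m,n)) p \<noteq> (0::'k)}" by (intro fsupp_scale fd)
      have "free_lift sU b \<psi> = b m (sB c n) - sU c (b m n)" unfolding d
        by (simp only: fl_diff[OF U fd f1] fl_scale[OF U fd] fl_fdelta[OF U] fst_conv snd_conv)
      moreover have "finite {p. \<psi> p \<noteq> 0}" unfolding d by (rule fsupp_diff[OF fd f1])
      ultimately show ?thesis by (simp add: module_hom.scale[OF b2])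
    qed
  qed
  then have "F.span (bil_rel sA sB) \<subseteq> ?Z" by (rule F.span_minimal[OF _ sub])
  then show ?thesis using phi by auto
qed

lemma hom_fl:
  assumes h: "module_hom sT sU h"
  shows "h (free_lift sT t \<phi>) = free_lift sU (\<lambda>x y. h (t x y)) \<phi>"
  unfolding free_lift_def by (simp add: module_hom.sum[OF h] module_hom.scale[OF h])

lemma tensor_ext:
  assumes T: "is_tensor sA sB sT t" and h1: "module_hom sT sU h1" and h2: "module_hom sT sU h2"
    and eq: "\<And>x y. h1 (t x y) = h2 (t x y)"
  shows "h1 = h2"
proof
  fix z
  obtain \<phi> where "z = free_lift sT t \<phi>" using T unfolding is_tensor_def by blast
  then show "h1 z = h2 z" by (simp add: hom_fl[OF h1] hom_fl[OF h2] eq)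
qed

lemma tlift_ex:
  fixes sA :: "'k::comm_ring_1 \<Rightarrow> 'a::ab_group_add \<Rightarrow> 'a" and sB :: "'k \<Rightarrow> 'b::ab_group_add \<Rightarrow> 'b"
    and sT :: "'k \<Rightarrow> 't::ab_group_add \<Rightarrow> 't" and sU :: "'k \<Rightarrow> 'u::ab_group_add \<Rightarrow> 'u"
  assumes T: "is_tensor sA sB sT t" and U: "module sU" and b: "bilin sA sB sU b"
  shows "\<exists>h. module_hom sT sU h \<and> (\<forall>x y. h (t x y) = b x y)"
proof -
  have mT: "module sT" and surj: "\<And>x. \<exists>\<phi>. finite {p. \<phi> p \<noteq> 0} \<and> x = free_lift sT t \<phi>"
    and ker: "\<And>\<phi>. finite {p. \<phi> p \<noteq> 0} \<Longrightarrow> free_lift sT t \<phi> = 0 \<Longrightarrow> \<phi> \<in> module.span free_scale (bil_rel sA sB)"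
    using T unfolding is_tensor_def by blast+
  define H where "H x = free_lift sU b (SOME \<phi>. finite {p. \<phi> p \<noteq> 0} \<and> x = free_lift sT t \<phi>)" for x
  have WD: "H (free_lift sT t \<phi>) = free_lift sU b \<phi>" if f: "finite {p. \<phi> p \<noteq> 0}" for \<phi>
  proof -
    define \<psi> where "\<psi> = (SOME \<psi>. finite {p. \<psi> p \<noteq> 0} \<and> free_lift sT t \<phi> = free_lift sT t \<psi>)"
    have "finite {p. \<psi> p \<noteq> 0} \<and> free_lift sT t \<phi> = free_lift sT t \<psi>"
      unfolding \<psi>_def by (rule someI_ex[of "\<lambda>\<psi>. finite {p. \<psi> p \<noteq> 0} \<and> free_lift sT t \<phi> = free_lift sT t \<psi>"]) (use f in blast)
    then have f2: "finite {p. \<psi> p \<noteq> 0}" and e: "free_lift sT t \<phi> = free_lift sT t \<psi>" by auto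
    have "free_lift sT t (\<psi> - \<phi>) = 0" by (simp add: fl_diff[OF mT f2 f] e)
    then have "\<psi> - \<phi> \<in> module.span free_scale (bil_rel sA sB)" by (rule ker[OF fsupp_diff[OF f2 f]])
    then have "free_lift sU b (\<psi> - \<phi>) = 0" by (rule fl_bilrel[OF U b])
    then have "free_lift sU b \<psi> = free_lift sU b \<phi>" by (simp add: fl_diff[OF U f2 f])
    then show ?thesis unfolding H_def \<psi>_def by simp
  qed
  have "module_hom sT sU H"
    unfolding module_hom_iff
  proof (intro conjI allI mT U)
    fix x y
    obtain \<phi> where f1: "finite {p. \<phi> p \<noteq> 0}" and x: "x = free_lift sT t \<phi>" using surj by blast
    obtain \<psi> where f2: "finite {p. \<psi> p \<noteq> 0}" and y: "y = free_lift sT t \<psi>" using surj by blast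
    have xy: "x + y = free_lift sT t (\<phi> + \<psi>)" by (simp add: x y fl_add[OF mT f1 f2])
    have "H (x + y) = free_lift sU b (\<phi> + \<psi>)" unfolding xy by (rule WD[OF fsupp_add[OF f1 f2]])
    also have "\<dots> = H x + H y" unfolding x y WD[OF f1] WD[OF f2] by (rule fl_add[OF U f1 f2])
    finally show "H (x + y) = H x + H y" .
  next
    fix c x
    obtain \<phi> where f1: "finite {p. \<phi> p \<noteq> 0}" and x: "x = free_lift sT t \<phi>" using surj by blast
    have xy: "sT c x = free_lift sT t (free_scale c \<phi>)" by (simp add: x fl_scale[OF mT f1])
    have "H (sT c x) = free_lift sU b (free_scale c \<phi>)" unfolding xy by (rule WD[OF fsupp_scale[OF f1]])
    also have "\<dots> = sU c (H x)" unfolding x WD[OF f1] by (rule fl_scale[OF U f1])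
    finally show "H (sT c x) = sU c (H x)" .
  qed
  moreover have "H (t x y) = b x y" for x y
  proof -
    have "t x y = free_lift sT t (fdelta (x, y))" by (simp add: fl_fdelta[OF mT])
    then show ?thesis by (simp add: WD[OF fsupp_fdelta] fl_fdelta[OF U])
  qed
  ultimately show ?thesis by blast
qed

lemma tlift_eq:
  assumes T: "is_tensor sA sB sT t" and h: "module_hom sT sU h" and hb: "\<And>x y. h (t x y) = b x y"
  shows "tlift sT t sU b = h"
  unfolding tlift_def
proof (rule the_equality)
  show "module_hom sT sU h \<and> (\<forall>x y. h (t x y) = b x y)" using h hb by blast
next
  fix h' assume "module_hom sT sU h' \<and> (\<forall>x y. h' (t x y) = b x y)"
  then show "h' = h" using tensor_ext[OF T _ h, of h'] hb by auto
qed

lemma tlift_prop: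
  fixes sA :: "'k::comm_ring_1 \<Rightarrow> 'a::ab_group_add \<Rightarrow> 'a" and sB :: "'k \<Rightarrow> 'b::ab_group_add \<Rightarrow> 'b"
    and sT :: "'k \<Rightarrow> 't::ab_group_add \<Rightarrow> 't" and sU :: "'k \<Rightarrow> 'u::ab_group_add \<Rightarrow> 'u"
  assumes T: "is_tensor sA sB sT t" and U: "module sU" and b: "bilin sA sB sU b"
  shows "module_hom sT sU (tlift sT t sU b)" "tlift sT t sU b (t x y) = b x y"
proof -
  obtain h where h: "module_hom sT sU h" "\<And>x y. h (t x y) = b x y" using tlift_ex[OF T U b] by blast
  have "tlift sT t sU b = h" by (rule tlift_eq[OF T h])
  then show "module_hom sT sU (tlift sT t sU b)" "tlift sT t sU b (t x y) = b x y" using h by auto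
qed

lemma gldim_idem:
  fixes I :: "'k::comm_ring_1 set"
  assumes k: "gldim_zero TYPE('k)" and I: "module.subspace (*) I"
  shows "\<exists>a\<in>I. \<forall>x\<in>I. x * a = x"
proof -
  interpret R: module "(*) :: 'k \<Rightarrow> 'k \<Rightarrow> 'k" by (rule module_ring)
  obtain J where J: "R.subspace J" "I \<inter> J = {0}" "\<forall>x. \<exists>a\<in>I. \<exists>b\<in>J. x = a + b"
    using k I unfolding gldim_zero_def by meson
  obtain a b where ab: "a \<in> I" "b \<in> J" "1 = a + b" using J(3) by blast
  have "x * a = x" if x: "x \<in> I" for x
  proof -
    have xb: "x * b \<in> J" using R.subspace_scale[OF J(1) ab(2)] by simp
    have b: "b = 1 - a" using ab(3) by (simp add: eq_diff_eq add.commute)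
    have "x * b = x - x * a" unfolding b by (simp add: algebra_simps)
    with xb have "x - x * a \<in> J" by simp
    moreover have "x - x * a \<in> I" using R.subspace_diff[OF I x R.subspace_scale[OF I ab(1)]] by simp
    ultimately have "x - x * a \<in> I \<inter> J" by (rule IntI[rotated])
    then have "x - x * a = 0" using J(2) by simp
    then show ?thesis by simp
  qed
  then show ?thesis using ab(1) by blast
qed

lemma my_add_diff_add: "(a::'a::ab_group_add) + c - (b + d) = (a - b) + (c - d)"
  by (simp add: algebra_simps)

lemma db_list:
  fixes sM :: "'k::comm_ring_1 \<Rightarrow> 'm::ab_group_add \<Rightarrow> 'm"
  assumes M: "module sM" and k: "gldim_zero TYPE('k)"
  shows "\<exists>(n::nat) e \<phi>. (\<forall>i<n. \<forall>x\<in>module.span sM (set xs). \<forall>y\<in>module.span sM (set xs).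
             \<phi> i (x + y) = \<phi> i x + \<phi> i y \<and> (\<forall>c. \<phi> i (sM c x) = c * \<phi> i x))
          \<and> (\<forall>m\<in>module.span sM (set xs). m = (\<Sum>i<n. sM (\<phi> i m) (e i)))"
proof (induction xs)
  case Nil
  interpret Mm: module sM by (rule M)
  show ?case by (rule_tac x=0 in exI) simp
next
  case (Cons s xs)
  interpret Mm: module sM by (rule M)
  interpret R: module "(*) :: 'k \<Rightarrow> 'k \<Rightarrow> 'k" by (rule module_ring)
  let ?N = "Mm.span (set xs)"
  let ?M = "Mm.span (set (s # xs))"
  obtain n e \<phi> where H1: "\<forall>i<(n::nat). \<forall>x\<in>?N. \<forall>y\<in>?N. \<phi> i (x + y) = \<phi> i x + \<phi> i y \<and> (\<forall>c. \<phi> i (sM c x) = c * \<phi> i x)"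
    and H2: "\<forall>m\<in>?N. m = (\<Sum>i<n. sM (\<phi> i m) (e i))"
    using Cons.IH by blast
  have lin: "\<phi> i (x + y) = \<phi> i x + \<phi> i y \<and> \<phi> i (sM c x) = c * \<phi> i x" if "i < n" "x \<in> ?N" "y \<in> ?N" for i x y c
    using H1 that by blast
  have rep: "m = (\<Sum>i<n. sM (\<phi> i m) (e i))" if "m \<in> ?N" for m using H2 that by blast
  have Mspan: "m \<in> ?M \<longleftrightarrow> (\<exists>r. m - sM r s \<in> ?N)" for m
    by (simp add: Mm.span_breakdown_eq)
  let ?I = "{r. sM r s \<in> ?N}"
  have "R.subspace ?I"
    unfolding R.subspace_def
  proof (intro conjI ballI allI)
    show "0 \<in> ?I" by (simp add: Mm.span_zero)
    show "x + y \<in> ?I" if "x \<in> ?I" "y \<in> ?I" for x y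
      using that Mm.span_add by (auto simp: Mm.scale_left_distrib)
    show "c * x \<in> ?I" if "x \<in> ?I" for c x
      using that Mm.span_scale[of "sM x s" _ c] by simp
  qed
  then obtain a where a: "a \<in> ?I" "\<And>x. x \<in> ?I \<Longrightarrow> x * a = x" using gldim_idem[OF k] by blast
  define R where "R m = (SOME r. m - sM r s \<in> ?N)" for m
  define \<psi> where "\<psi> m = R m * (1 - a)" for m
  have psi: "\<psi> m = r * (1 - a)" if "m - sM r s \<in> ?N" for m r
  proof -
    have R: "m - sM (R m) s \<in> ?N" unfolding R_def by (rule someI[of _ r]) (rule that)
    have "sM (R m - r) s = (m - sM r s) - (m - sM (R m) s)" by (simp add: Mm.scale_left_diff_distrib)
    then have "R m - r \<in> ?I" using Mm.span_diff[OF that R] by simp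
    then have "(R m - r) * a = R m - r" by (rule a(2))
    then have "(R m - r) * (1 - a) = 0" by (simp add: algebra_simps)
    then show ?thesis unfolding \<psi>_def by (simp add: algebra_simps)
  qed
  have Pin: "m - sM (\<psi> m) s \<in> ?N" if "m - sM r s \<in> ?N" for m r
  proof -
    have ra: "r * a \<in> ?I" using R.subspace_scale[OF \<open>R.subspace ?I\<close> a(1)] by simp
    have eq: "m - sM (\<psi> m) s = (m - sM r s) + sM (r * a) s"
      by (simp add: psi[OF that] algebra_simps Mm.scale_left_diff_distrib Mm.scale_left_distrib)
    have ra': "sM (r * a) s \<in> ?N" using ra by simp
    show ?thesis by (subst eq) (rule Mm.span_add[OF that ra'])
  qed
  define P where "P m = m - sM (\<psi> m) s" for m
  have psi_lin: "\<psi> (x + y) = \<psi> x + \<psi> y \<and> \<psi> (sM c x) = c * \<psi> x" if xM: "x \<in> ?M" and yM: "y \<in> ?M" for x y c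
  proof -
    obtain rx where rx: "x - sM rx s \<in> ?N" using Mspan[THEN iffD1, OF xM] by blast
    obtain ry where ry: "y - sM ry s \<in> ?N" using Mspan[THEN iffD1, OF yM] by blast
    have e1: "(x + y) - sM (rx + ry) s = (x - sM rx s) + (y - sM ry s)" by (simp add: Mm.scale_left_distrib)
    have 1: "(x + y) - sM (rx + ry) s \<in> ?N" by (subst e1) (rule Mm.span_add[OF rx ry])
    have e2: "sM c x - sM (c * rx) s = sM c (x - sM rx s)" by (simp add: Mm.scale_right_diff_distrib)
    have 2: "sM c x - sM (c * rx) s \<in> ?N" by (subst e2) (rule Mm.span_scale[OF rx])
    have h1: "\<psi> (x + y) = (rx + ry) * (1 - a)" by (rule psi[OF 1])
    have h2: "\<psi> (sM c x) = (c * rx) * (1 - a)" by (rule psi[OF 2])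
    have h3: "\<psi> x = rx * (1 - a)" by (rule psi[OF rx])
    have h4: "\<psi> y = ry * (1 - a)" by (rule psi[OF ry])
    have A: "\<psi> (x + y) = \<psi> x + \<psi> y" unfolding h1 h3 h4 by (rule distrib_right)
    have B: "\<psi> (sM c x) = c * \<psi> x" unfolding h2 h3 by (rule mult.assoc)
    show ?thesis using A B by (rule conjI)
  qed
  have PN: "P m \<in> ?N" if mM: "m \<in> ?M" for m
  proof -
    obtain r where "m - sM r s \<in> ?N" using Mspan[THEN iffD1, OF mM] by blast
    then show ?thesis unfolding P_def by (rule Pin)
  qed
  have P_lin: "P (x + y) = P x + P y \<and> P (sM c x) = sM c (P x)" if "x \<in> ?M" "y \<in> ?M" for x y c
  proof -
    have A: "\<psi> (x + y) = \<psi> x + \<psi> y" and B: "\<psi> (sM c x) = c * \<psi> x" using psi_lin[OF that, of c] by blast+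
    have "P (x + y) = P x + P y" unfolding P_def A Mm.scale_left_distrib by (rule my_add_diff_add)
    moreover have "P (sM c x) = sM c (P x)" unfolding P_def B Mm.scale_right_diff_distrib Mm.scale_scale ..
    ultimately show ?thesis ..
  qed
  define e' where "e' i = (if i < n then e i else s)" for i
  define \<phi>' where "\<phi>' i m = (if i < n then \<phi> i (P m) else \<psi> m)" for i m
  show ?case
  proof (intro exI[of _ "Suc n"] exI[of _ e'] exI[of _ \<phi>'] conjI ballI allI impI)
    fix i x y c assume i: "i < Suc n" and x: "x \<in> ?M" and y: "y \<in> ?M"
    have A: "\<psi> (x + y) = \<psi> x + \<psi> y" and B: "\<psi> (sM c x) = c * \<psi> x" using psi_lin[OF x y, of c] by blast+
    have PA: "P (x + y) = P x + P y" and PB: "P (sM c x) = sM c (P x)" using P_lin[OF x y, of c] by blast+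
    show "\<phi>' i (x + y) = \<phi>' i x + \<phi>' i y"
    proof (cases "i < n")
      case True
      have "\<phi> i (P x + P y) = \<phi> i (P x) + \<phi> i (P y)" using lin[OF True PN[OF x] PN[OF y]] by blast
      then show ?thesis unfolding \<phi>'_def PA using True by simp
    next
      case False
      then show ?thesis unfolding \<phi>'_def A by simp
    qed
    show "\<phi>' i (sM c x) = c * \<phi>' i x"
    proof (cases "i < n")
      case True
      have "\<phi> i (sM c (P x)) = c * \<phi> i (P x)" using lin[OF True PN[OF x] PN[OF y]] by blast
      then show ?thesis unfolding \<phi>'_def PB using True by simp
    next
      case False
      then show ?thesis unfolding \<phi>'_def B by simp
    qed
  next
    fix m assume m: "m \<in> ?M"
    have "m = P m + sM (\<psi> m) s" unfolding P_def by simp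
    also have "P m = (\<Sum>i<n. sM (\<phi> i (P m)) (e i))" by (rule rep[OF PN[OF m]])
    also have "(\<Sum>i<n. sM (\<phi> i (P m)) (e i)) = (\<Sum>i<n. sM (\<phi>' i m) (e' i))"
      by (rule sum.cong) (auto simp: \<phi>'_def e'_def)
    also have "sM (\<psi> m) s = sM (\<phi>' n m) (e' n)" by (simp add: \<phi>'_def e'_def)
    finally show "m = (\<Sum>i<Suc n. sM (\<phi>' i m) (e' i))" by simp
  qed
qed

lemma db_exists:
  fixes sM :: "'k::comm_ring_1 \<Rightarrow> 'm::ab_group_add \<Rightarrow> 'm"
  assumes M: "module sM" and k: "gldim_zero TYPE('k)" and fg: "finitely_generated sM"
  shows "\<exists>n e \<phi>. dual_basis sM n e \<phi>"
proof -
  obtain S where S: "finite S" "module.span sM S = UNIV" using fg unfolding finitely_generated_def by blast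
  obtain xs where xs: "set xs = S" using finite_list[OF S(1)] by blast
  obtain n e \<phi> where H1: "\<forall>i<(n::nat). \<forall>x\<in>module.span sM (set xs). \<forall>y\<in>module.span sM (set xs).
             \<phi> i (x + y) = \<phi> i x + \<phi> i y \<and> (\<forall>c. \<phi> i (sM c x) = c * \<phi> i x)"
    and H2: "\<forall>m\<in>module.span sM (set xs). m = (\<Sum>i<n. sM (\<phi> i m) (e i))"
    using db_list[OF M k, of xs] by blast
  have "dual_basis sM n e \<phi>"
    unfolding dual_basis_def
  proof (intro conjI allI impI)
    fix i assume i: "i < n"
    show "module_hom sM (*) (\<phi> i)"
      unfolding module_hom_iff using H1 i M module_ring unfolding xs S(2) by blast
  next
    fix m show "m = (\<Sum>i<n. sM (\<phi> i m) (e i))" using H2 unfolding xs S(2) by blast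
  qed
  then show ?thesis by blast
qed

lemma tensor_mods:
  assumes "is_tensor sA sB sT t"
  shows "module sA" "module sB" "module sT"
  using assms unfolding is_tensor_def by blast+

lemma tensor_bilin:
  assumes "is_tensor sA sB sT t"
  shows "bilin sA sB sT t"
  using assms unfolding is_tensor_def bilin_def by blast

lemma bilin_homs:
  assumes "bilin sA sB sU b"
  shows "module_hom sA sU (\<lambda>x. b x y)" "module_hom sB sU (b x)"
  using assms unfolding bilin_def by blast+

lemma bilin_comp_left:
  assumes b: "bilin sA sB sU b" and f: "module_hom sX sA f"
  shows "bilin sX sB sU (\<lambda>x y. b (f x) y)"
  unfolding bilin_def
proof (intro conjI allI)
  fix y show "module_hom sX sU (\<lambda>x. b (f x) y)"
    using module_hom_compose[OF f bilin_homs(1)[OF b, of y]] by (simp add: o_def)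
next
  fix x show "module_hom sB sU (b (f x))" using bilin_homs(2)[OF b] .
qed

lemma bilin_comp_right:
  assumes b: "bilin sA sB sU b" and g: "module_hom sY sB g"
  shows "bilin sA sY sU (\<lambda>x y. b x (g y))"
  unfolding bilin_def
proof (intro conjI allI)
  fix y show "module_hom sA sU (\<lambda>x. b x (g y))" using bilin_homs(1)[OF b] .
next
  fix x show "module_hom sY sU (\<lambda>y. b x (g y))"
    using module_hom_compose[OF g bilin_homs(2)[OF b, of x]] by (simp add: o_def)
qed

lemma bilin_fun:
  assumes phi: "module_hom sM (*) \<phi>" and C: "module sC"
  shows "bilin sM sC sC (\<lambda>m c. sC (\<phi> m) c)"
  unfolding bilin_def
proof (intro conjI allI)
  have M: "module sM" using phi unfolding module_hom_iff by blast
  fix c show "module_hom sM sC (\<lambda>m. sC (\<phi> m) c)"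
    using module_pair.module_hom_compose_scale[OF module_pair.intro[OF M C] phi] .
next
  fix m show "module_hom sC sC (sC (\<phi> m))" using module.module_hom_scale_self[OF C] .
qed

lemma tassoc_prop:
  assumes AB: "is_tensor sA sB sAB tAB" and ABC: "is_tensor sAB sC sAB_C tAB_C"
    and ABC2: "is_tensor sA sBC sA_BC tA_BC" and BC: "bilin sB sC sBC tBC"
  shows "module_hom sAB_C sA_BC (tassoc sAB_C tAB_C sAB tAB sA_BC tA_BC tBC)"
    "tassoc sAB_C tAB_C sAB tAB sA_BC tA_BC tBC (tAB_C (tAB x y) z) = tA_BC x (tBC y z)"
proof -
  note mA = tensor_mods(1)[OF AB] and mB = tensor_mods(2)[OF AB] and mAB = tensor_mods(3)[OF AB]
  note mC = tensor_mods(2)[OF ABC] and mABC = tensor_mods(3)[OF ABC] and mABC2 = tensor_mods(3)[OF ABC2]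
  note mBC = tensor_mods(2)[OF ABC2]
  define g where "g z = tlift sAB tAB sA_BC (\<lambda>x y. tA_BC x (tBC y z))" for z
  have bz: "bilin sA sB sA_BC (\<lambda>x y. tA_BC x (tBC y z))" for z
    unfolding bilin_def
  proof (intro conjI allI)
    fix y show "module_hom sA sA_BC (\<lambda>x. tA_BC x (tBC y z))"
      using bilin_homs(1)[OF tensor_bilin[OF ABC2]] .
  next
    fix x show "module_hom sB sA_BC (\<lambda>y. tA_BC x (tBC y z))"
      using module_hom_compose[OF bilin_homs(1)[OF BC, of z] bilin_homs(2)[OF tensor_bilin[OF ABC2], of x]]
      by (simp add: o_def)
  qed
  have g: "module_hom sAB sA_BC (g z)" "g z (tAB x y) = tA_BC x (tBC y z)" for z x y
    unfolding g_def by (rule tlift_prop[OF AB mABC2 bz])+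
  have gadd: "g (z + z') = (\<lambda>u. g z u + g z' u)" for z z'
    unfolding g_def[of "z + z'"]
  proof (rule tlift_eq[OF AB])
    show "module_hom sAB sA_BC (\<lambda>u. g z u + g z' u)"
      by (rule module_pair.module_hom_add[OF module_pair.intro[OF mAB mABC2] g(1) g(1)])
    fix x y show "g z (tAB x y) + g z' (tAB x y) = tA_BC x (tBC y (z + z'))"
      by (simp add: g(2) module_hom.add[OF bilin_homs(2)[OF BC]] module_hom.add[OF bilin_homs(2)[OF tensor_bilin[OF ABC2]]])
  qed
  have gscale: "g (sC c z) = (\<lambda>u. sA_BC c (g z u))" for c z
    unfolding g_def[of "sC c z"]
  proof (rule tlift_eq[OF AB])
    show "module_hom sAB sA_BC (\<lambda>u. sA_BC c (g z u))"
      by (rule module_pair.module_hom_scale[OF module_pair.intro[OF mAB mABC2] g(1)])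
    fix x y show "sA_BC c (g z (tAB x y)) = tA_BC x (tBC y (sC c z))"
      by (simp add: g(2) module_hom.scale[OF bilin_homs(2)[OF BC]] module_hom.scale[OF bilin_homs(2)[OF tensor_bilin[OF ABC2]]])
  qed
  have bo: "bilin sAB sC sA_BC (\<lambda>u z. g z u)"
    unfolding bilin_def
  proof (intro conjI allI)
    fix z show "module_hom sAB sA_BC (\<lambda>u. g z u)" using g(1) by simp
  next
    fix u show "module_hom sC sA_BC (\<lambda>z. g z u)"
      unfolding module_hom_iff using mC mABC2 by (simp add: gadd gscale)
  qed
  have eq: "tassoc sAB_C tAB_C sAB tAB sA_BC tA_BC tBC = tlift sAB_C tAB_C sA_BC (\<lambda>u z. g z u)"
    unfolding tassoc_def g_def ..
  show "module_hom sAB_C sA_BC (tassoc sAB_C tAB_C sAB tAB sA_BC tA_BC tBC)"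
    unfolding eq by (rule tlift_prop[OF ABC mABC2 bo])
  show "tassoc sAB_C tAB_C sAB tAB sA_BC tA_BC tBC (tAB_C (tAB x y) z) = tA_BC x (tBC y z)"
    unfolding eq tlift_prop(2)[OF ABC mABC2 bo] g(2) ..
qed

lemma tswap_prop:
  assumes T: "is_tensor sC sC sCC tCC"
  shows "module_hom sCC sCC (tswap sCC tCC)" "tswap sCC tCC (tCC x y) = tCC y x"
proof -
  have b: "bilin sC sC sCC (\<lambda>x y. tCC y x)"
    using tensor_bilin[OF T] unfolding bilin_def by blast
  show "module_hom sCC sCC (tswap sCC tCC)" "tswap sCC tCC (tCC x y) = tCC y x"
    unfolding tswap_def by (rule tlift_prop[OF T tensor_mods(3)[OF T] b])+
qed

definition LL where "LL sMC tMC sC \<phi> = tlift sMC tMC sC (\<lambda>m c. sC (\<phi> m) c)"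

lemma LL_prop:
  assumes T: "is_tensor sM sC sMC tMC" and phi: "module_hom sM (*) \<phi>"
  shows "module_hom sMC sC (LL sMC tMC sC \<phi>)" "LL sMC tMC sC \<phi> (tMC m c) = sC (\<phi> m) c"
  unfolding LL_def by (rule tlift_prop[OF T tensor_mods(2)[OF T] bilin_fun[OF phi tensor_mods(2)[OF T]]])+

lemma db_hom: "dual_basis sM n e \<phi> \<Longrightarrow> i < n \<Longrightarrow> module_hom sM (*) (\<phi> i)"
  unfolding dual_basis_def by blast

lemma db_rep: "dual_basis sM n e \<phi> \<Longrightarrow> m = (\<Sum>i<n. sM (\<phi> i m) (e i))"
  unfolding dual_basis_def by blast

lemma expand:
  assumes T: "is_tensor sM sC sMC tMC" and db: "dual_basis sM n e \<phi>"
  shows "x = (\<Sum>k<n. tMC (e k) (LL sMC tMC sC (\<phi> k) x))"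
proof -
  note mM = tensor_mods(1)[OF T] and mC = tensor_mods(2)[OF T] and mMC = tensor_mods(3)[OF T]
  note bt = tensor_bilin[OF T]
  have h2: "module_hom sMC sMC (\<lambda>x. \<Sum>k\<in>{..<n}. tMC (e k) (LL sMC tMC sC (\<phi> k) x))"
    by (rule module_pair.module_hom_sum[OF module_pair.intro[OF mMC mMC]])
       (auto simp: mMC intro!: module_hom_compose[OF LL_prop(1)[OF T db_hom[OF db]] bilin_homs(2)[OF bt], unfolded o_def])
  have "(\<lambda>x. x) = (\<lambda>x. \<Sum>k\<in>{..<n}. tMC (e k) (LL sMC tMC sC (\<phi> k) x))"
  proof (rule tensor_ext[OF T module.module_hom_ident[OF mMC] h2])
    fix m c
    have "(\<Sum>k<n. tMC (e k) (LL sMC tMC sC (\<phi> k) (tMC m c))) = (\<Sum>k<n. tMC (e k) (sC (\<phi> k m) c))"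
      by (rule sum.cong) (auto simp: LL_prop(2)[OF T db_hom[OF db]])
    also have "\<dots> = (\<Sum>k<n. tMC (sM (\<phi> k m) (e k)) c)"
      by (rule sum.cong) (auto simp: module_hom.scale[OF bilin_homs(1)[OF bt]] module_hom.scale[OF bilin_homs(2)[OF bt]])
    also have "\<dots> = tMC (\<Sum>k<n. sM (\<phi> k m) (e k)) c"
      by (rule module_hom.sum[OF bilin_homs(1)[OF bt], symmetric])
    also have "\<dots> = tMC m c" using db_rep[OF db, of m] by simp
    finally show "tMC m c = (\<Sum>k<n. tMC (e k) (LL sMC tMC sC (\<phi> k) (tMC m c)))" by simp
  qed
  then show ?thesis by (metis)
qed

lemma TI:
  assumes T: "is_tensor sM sC sMC tMC" and db: "dual_basis sM n e \<phi>" and db': "dual_basis sM n' e' \<psi>"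
    and g: "module_hom sM sMC g"
  shows "(\<Sum>i<n. LL sMC tMC sC (\<phi> i) (g (e i))) = (\<Sum>j<n'. LL sMC tMC sC (\<psi> j) (g (e' j)))"
proof -
  note mM = tensor_mods(1)[OF T] and mC = tensor_mods(2)[OF T] and mMC = tensor_mods(3)[OF T]
  note bt = tensor_bilin[OF T]
  have key: "(\<lambda>x. \<Sum>i\<in>{..<n}. sC (\<psi> j (e i)) (LL sMC tMC sC (\<phi> i) x)) = LL sMC tMC sC (\<psi> j)" if j: "j < n'" for j
  proof (rule tensor_ext[OF T _ LL_prop(1)[OF T db_hom[OF db' j]]])
    show "module_hom sMC sC (\<lambda>x. \<Sum>i\<in>{..<n}. sC (\<psi> j (e i)) (LL sMC tMC sC (\<phi> i) x))"
      by (rule module_pair.module_hom_sum[OF module_pair.intro[OF mMC mC]])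
         (auto simp: mMC mC intro!: module_pair.module_hom_scale[OF module_pair.intro[OF mMC mC]] LL_prop(1)[OF T db_hom[OF db]])
    fix m c
    have "(\<Sum>i<n. sC (\<psi> j (e i)) (LL sMC tMC sC (\<phi> i) (tMC m c))) = (\<Sum>i<n. sC (\<phi> i m * \<psi> j (e i)) c)"
      by (rule sum.cong) (auto simp: LL_prop(2)[OF T db_hom[OF db]] module.scale_scale[OF mC] mult.commute)
    also have "\<dots> = sC (\<Sum>i<n. \<phi> i m * \<psi> j (e i)) c" by (simp add: module.scale_sum_left[OF mC])
    also have "(\<Sum>i<n. \<phi> i m * \<psi> j (e i)) = \<psi> j m"
    proof -
      have "\<psi> j m = \<psi> j (\<Sum>i<n. sM (\<phi> i m) (e i))" using db_rep[OF db, of m] by simp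
      also have "\<dots> = (\<Sum>i<n. \<phi> i m * \<psi> j (e i))"
        by (simp add: module_hom.sum[OF db_hom[OF db' j]] module_hom.scale[OF db_hom[OF db' j]])
      finally show ?thesis by simp
    qed
    finally show "(\<Sum>i<n. sC (\<psi> j (e i)) (LL sMC tMC sC (\<phi> i) (tMC m c))) = LL sMC tMC sC (\<psi> j) (tMC m c)"
      by (simp add: LL_prop(2)[OF T db_hom[OF db' j]])
  qed
  have "(\<Sum>j<n'. LL sMC tMC sC (\<psi> j) (g (e' j))) = (\<Sum>j<n'. \<Sum>i<n. sC (\<psi> j (e i)) (LL sMC tMC sC (\<phi> i) (g (e' j))))"
    by (rule sum.cong) (auto simp: key[symmetric])
  also have "\<dots> = (\<Sum>i<n. \<Sum>j<n'. sC (\<psi> j (e i)) (LL sMC tMC sC (\<phi> i) (g (e' j))))" by (rule sum.swap)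
  also have "\<dots> = (\<Sum>i<n. LL sMC tMC sC (\<phi> i) (g (\<Sum>j<n'. sM (\<psi> j (e i)) (e' j))))"
    by (rule sum.cong) (auto simp: module_hom.sum[OF g] module_hom.scale[OF g] module_hom.sum[OF LL_prop(1)[OF T db_hom[OF db]]] module_hom.scale[OF LL_prop(1)[OF T db_hom[OF db]]])
  also have "\<dots> = (\<Sum>i<n. LL sMC tMC sC (\<phi> i) (g (e i)))"
  proof (rule sum.cong)
    fix i show "LL sMC tMC sC (\<phi> i) (g (\<Sum>j<n'. sM (\<psi> j (e i)) (e' j))) = LL sMC tMC sC (\<phi> i) (g (e i))"
      using db_rep[OF db', of "e i"] by simp
  qed simp
  finally show ?thesis by simp
qed

lemma trace_eq:
  assumes T: "is_tensor sM sC sMC tMC" and db: "dual_basis sM n e \<phi>" and g: "module_hom sM sMC g"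
  shows "twisted_trace sM sMC tMC sC g = (\<Sum>i<n. LL sMC tMC sC (\<phi> i) (g (e i)))"
proof -
  let ?P = "\<lambda>x. \<exists>n e \<phi>. dual_basis sM n e \<phi> \<and> x = (\<Sum>i<n. tlift sMC tMC sC (\<lambda>m c. sC (\<phi> i m) c) (g (e i)))"
  have "?P (\<Sum>i<n. LL sMC tMC sC (\<phi> i) (g (e i)))" using db unfolding LL_def by blast
  then have "?P (twisted_trace sM sMC tMC sC g)" unfolding twisted_trace_def by (rule someI)
  then obtain n' e' \<psi> where db': "dual_basis sM n' e' \<psi>"
    and eq: "twisted_trace sM sMC tMC sC g = (\<Sum>i<n'. LL sMC tMC sC (\<psi> i) (g (e' i)))"
    unfolding LL_def by blast
  show ?thesis unfolding eq by (rule TI[OF T db' db g])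
qed

lemma main_sym:
  fixes sC :: "'k::comm_ring_1 \<Rightarrow> 'c::ab_group_add \<Rightarrow> 'c"
    and sCC :: "'k \<Rightarrow> 'cc::ab_group_add \<Rightarrow> 'cc" and tCC :: "'c \<Rightarrow> 'c \<Rightarrow> 'cc"
    and \<Delta> :: "'c \<Rightarrow> 'cc"
    and sM :: "'k \<Rightarrow> 'm::ab_group_add \<Rightarrow> 'm"
    and sMC :: "'k \<Rightarrow> 'mc::ab_group_add \<Rightarrow> 'mc" and tMC :: "'m \<Rightarrow> 'c \<Rightarrow> 'mc"
    and sMC_C :: "'k \<Rightarrow> 'mc_c::ab_group_add \<Rightarrow> 'mc_c" and tMC_C :: "'mc \<Rightarrow> 'c \<Rightarrow> 'mc_c"
    and sM_CC :: "'k \<Rightarrow> 'm_cc::ab_group_add \<Rightarrow> 'm_cc" and tM_CC :: "'m \<Rightarrow> 'cc \<Rightarrow> 'm_cc"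
    and \<rho> :: "'m \<Rightarrow> 'mc"
  assumes TCC: "is_tensor sC sC sCC tCC" and Dh: "module_hom sC sCC \<Delta>"
    and TMC: "is_tensor sM sC sMC tMC" and TMCC: "is_tensor sMC sC sMC_C tMC_C"
    and TMCC2: "is_tensor sM sCC sM_CC tM_CC" and rh: "module_hom sM sMC \<rho>"
    and coassoc: "\<And>m. tassoc sMC_C tMC_C sMC tMC sM_CC tM_CC tCC
            (tlift sMC tMC sMC_C (\<lambda>x y. tMC_C (\<rho> x) y) (\<rho> m))
          = tlift sMC tMC sM_CC (\<lambda>x y. tM_CC x (\<Delta> y)) (\<rho> m)"
    and db: "dual_basis sM n e \<phi>"
    and fh: "module_hom sM sM f"
    and fcol: "\<And>m. \<rho> (f m) = tlift sMC tMC sMC (\<lambda>x c. tMC (f x) c) (\<rho> m)"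
  shows "\<Delta> (\<Sum>i<n. LL sMC tMC sC (\<phi> i) (\<rho> (f (e i))))
       = tswap sCC tCC (\<Delta> (\<Sum>i<n. LL sMC tMC sC (\<phi> i) (\<rho> (f (e i)))))"
proof -
  note mM = tensor_mods(1)[OF TMC] and mC = tensor_mods(2)[OF TMC] and mMC = tensor_mods(3)[OF TMC]
  note mCC = tensor_mods(3)[OF TCC] and mMCC = tensor_mods(3)[OF TMCC] and mMCC2 = tensor_mods(3)[OF TMCC2]
  note bCC = tensor_bilin[OF TCC] and bMC = tensor_bilin[OF TMC] and bMCC = tensor_bilin[OF TMCC]
    and bMCC2 = tensor_bilin[OF TMCC2]
  define L where "L i = LL sMC tMC sC (\<phi> i)" for i
  define L' where "L' i = LL sM_CC tM_CC sCC (\<phi> i)" for i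
  define D where "D i j = L i (\<rho> (e j))" for i j
  define F where "F i j = \<phi> i (f (e j))" for i j
  have Lh: "module_hom sMC sC (L i)" and Lt: "L i (tMC m c) = sC (\<phi> i m) c" if "i < n" for i m c
    unfolding L_def using LL_prop[OF TMC db_hom[OF db that]] by auto
  have L'h: "module_hom sM_CC sCC (L' i)" and L't: "L' i (tM_CC m c) = sCC (\<phi> i m) c" if "i < n" for i m c
    unfolding L'_def using LL_prop[OF TMCC2 db_hom[OF db that]] by auto
  have E1: "\<rho> (e j) = (\<Sum>k<n. tMC (e k) (D k j))" for j
    unfolding D_def L_def by (rule expand[OF TMC db])
  have tCC_suml: "tCC (\<Sum>i\<in>A. a i) b = (\<Sum>i\<in>A. tCC (a i) b)" for A :: "nat set" and a b
    by (rule module_hom.sum[OF bilin_homs(1)[OF bCC]])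
  have tCC_sumr: "tCC a (\<Sum>i\<in>A. b i) = (\<Sum>i\<in>A. tCC a (b i))" for A :: "nat set" and a b
    by (rule module_hom.sum[OF bilin_homs(2)[OF bCC]])
  have tCC_scl: "tCC (sC c a) b = sCC c (tCC a b)" for c a b
    by (rule module_hom.scale[OF bilin_homs(1)[OF bCC]])
  have tCC_scr: "tCC a (sC c b) = sCC c (tCC a b)" for c a b
    by (rule module_hom.scale[OF bilin_homs(2)[OF bCC]])
  have S1: "(\<Sum>i<n. sC (\<phi> l (e i)) (D i j)) = D l j" if l: "l < n" for l j
  proof -
    have "D l j = L l (\<Sum>i<n. tMC (e i) (D i j))" unfolding D_def[of l j] E1[of j] ..
    also have "\<dots> = (\<Sum>i<n. sC (\<phi> l (e i)) (D i j))"
      by (simp add: module_hom.sum[OF Lh[OF l]] Lt[OF l])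
    finally show ?thesis by simp
  qed
  have Lrf: "L i (\<rho> (f (e j))) = (\<Sum>k<n. sC (F k j) (D i k))" if i: "i < n" for i j
  proof -
    have "L i (\<rho> (f (e j))) = L i (\<rho> (\<Sum>k<n. sM (F k j) (e k)))"
      unfolding F_def using db_rep[OF db, of "f (e j)"] by simp
    also have "\<dots> = (\<Sum>k<n. sC (F k j) (D i k))"
      by (simp add: module_hom.sum[OF rh] module_hom.scale[OF rh] module_hom.sum[OF Lh[OF i]] module_hom.scale[OF Lh[OF i]] D_def)
    finally show ?thesis .
  qed
  \<comment> \<open>(b) coassociativity on matrix coefficients\<close>
  define Tl where "Tl = tlift sMC tMC sMC_C (\<lambda>x y. tMC_C (\<rho> x) y)"
  define Tr where "Tr = tlift sMC tMC sM_CC (\<lambda>x y. tM_CC x (\<Delta> y))"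
  define As where "As = tassoc sMC_C tMC_C sMC tMC sM_CC tM_CC tCC"
  have Tlh: "module_hom sMC sMC_C Tl" and Tlt: "Tl (tMC x y) = tMC_C (\<rho> x) y" for x y
    unfolding Tl_def by (rule tlift_prop[OF TMC mMCC bilin_comp_left[OF bMCC rh]])+
  have Trh: "module_hom sMC sM_CC Tr" and Trt: "Tr (tMC x y) = tM_CC x (\<Delta> y)" for x y
    unfolding Tr_def by (rule tlift_prop[OF TMC mMCC2 bilin_comp_right[OF bMCC2 Dh]])+
  have Ash: "module_hom sMC_C sM_CC As" and Ast: "As (tMC_C (tMC x y) z) = tM_CC x (tCC y z)" for x y z
    unfolding As_def by (rule tassoc_prop[OF TMC TMCC TMCC2 bCC])+
  have Dco: "\<Delta> (D l k) = (\<Sum>j<n. tCC (D l j) (D j k))" if l: "l < n" for l k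
  proof -
    have "Tl (\<rho> (e k)) = (\<Sum>j<n. tMC_C (\<rho> (e j)) (D j k))"
      by (subst E1[of k]) (simp add: module_hom.sum[OF Tlh] Tlt)
    also have "\<dots> = (\<Sum>j<n. \<Sum>i<n. tMC_C (tMC (e i) (D i j)) (D j k))"
      by (rule sum.cong[OF refl], subst E1) (simp add: module_hom.sum[OF bilin_homs(1)[OF bMCC]])
    finally have 1: "As (Tl (\<rho> (e k))) = (\<Sum>j<n. \<Sum>i<n. tM_CC (e i) (tCC (D i j) (D j k)))"
      by (simp add: module_hom.sum[OF Ash] Ast)
    have 2: "Tr (\<rho> (e k)) = (\<Sum>j<n. tM_CC (e j) (\<Delta> (D j k)))"
      by (subst E1[of k]) (simp add: module_hom.sum[OF Trh] Trt)
    have 3: "As (Tl (\<rho> (e k))) = Tr (\<rho> (e k))" using coassoc[of "e k"] unfolding As_def Tl_def Tr_def .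
    have "\<Delta> (D l k) = \<Delta> (\<Sum>j<n. sC (\<phi> l (e j)) (D j k))" by (simp add: S1[OF l])
    also have "\<dots> = L' l (Tr (\<rho> (e k)))"
      by (simp add: 2 module_hom.sum[OF L'h[OF l]] L't[OF l] module_hom.sum[OF Dh] module_hom.scale[OF Dh])
    also have "\<dots> = L' l (As (Tl (\<rho> (e k))))" by (simp add: 3)
    also have "\<dots> = (\<Sum>j<n. \<Sum>i<n. sCC (\<phi> l (e i)) (tCC (D i j) (D j k)))"
      by (simp add: 1 module_hom.sum[OF L'h[OF l]] L't[OF l])
    also have "\<dots> = (\<Sum>j<n. tCC (\<Sum>i<n. sC (\<phi> l (e i)) (D i j)) (D j k))"
      by (simp add: tCC_suml tCC_scl)
    also have "\<dots> = (\<Sum>j<n. tCC (D l j) (D j k))" by (simp add: S1[OF l])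
    finally show ?thesis .
  qed
  \<comment> \<open>(c) colinearity: FD = DF\<close>
  define Tf where "Tf = tlift sMC tMC sMC (\<lambda>x c. tMC (f x) c)"
  have Tfh: "module_hom sMC sMC Tf" and Tft: "Tf (tMC x y) = tMC (f x) y" for x y
    unfolding Tf_def by (rule tlift_prop[OF TMC mMC bilin_comp_left[OF bMC fh]])+
  have FD: "(\<Sum>k<n. sC (F i k) (D k j)) = (\<Sum>k<n. sC (F k j) (D i k))" if i: "i < n" for i j
  proof -
    have "L i (\<rho> (f (e j))) = L i (Tf (\<rho> (e j)))" unfolding fcol Tf_def ..
    also have "\<dots> = (\<Sum>k<n. sC (F i k) (D k j))"
      by (subst E1) (simp add: module_hom.sum[OF Tfh] Tft module_hom.sum[OF Lh[OF i]] Lt[OF i] F_def)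
    finally show ?thesis using Lrf[OF i, of j] by simp
  qed
  define G where "G k j = (\<Sum>i<n. sC (F k i) (D i j))" for k j
  have X1: "(\<Sum>i<n. \<Sum>k<n. \<Sum>j<n. h i k j) = (\<Sum>k<n. \<Sum>j<n. \<Sum>i<n. h i k j)" for h :: "nat \<Rightarrow> nat \<Rightarrow> nat \<Rightarrow> 'cc"
  proof -
    have "(\<Sum>i<n. \<Sum>k<n. \<Sum>j<n. h i k j) = (\<Sum>k<n. \<Sum>i<n. \<Sum>j<n. h i k j)" by (rule sum.swap)
    also have "\<dots> = (\<Sum>k<n. \<Sum>j<n. \<Sum>i<n. h i k j)" by (rule sum.cong[OF refl], rule sum.swap)
    finally show ?thesis .
  qed
  have trf: "(\<Sum>i<n. LL sMC tMC sC (\<phi> i) (\<rho> (f (e i)))) = (\<Sum>i<n. \<Sum>k<n. sC (F k i) (D i k))"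
    by (rule sum.cong[OF refl]) (simp add: Lrf[unfolded L_def])
  have d1: "\<Delta> (\<Sum>i<n. \<Sum>k<n. sC (F k i) (D i k)) = (\<Sum>i<n. \<Sum>k<n. \<Sum>j<n. tCC (sC (F k i) (D i j)) (D j k))"
  proof -
    have "\<Delta> (\<Sum>i<n. \<Sum>k<n. sC (F k i) (D i k)) = (\<Sum>i<n. \<Sum>k<n. sCC (F k i) (\<Delta> (D i k)))"
      by (simp add: module_hom.sum[OF Dh] module_hom.scale[OF Dh])
    also have "\<dots> = (\<Sum>i<n. \<Sum>k<n. sCC (F k i) (\<Sum>j<n. tCC (D i j) (D j k)))"
      by (rule sum.cong[OF refl], rule sum.cong[OF refl]) (simp add: Dco)
    also have "\<dots> = (\<Sum>i<n. \<Sum>k<n. \<Sum>j<n. tCC (sC (F k i) (D i j)) (D j k))"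
      by (simp add: module.scale_sum_right[OF mCC] tCC_scl)
    finally show ?thesis .
  qed
  have d2: "(\<Sum>k<n. \<Sum>j<n. tCC (G k j) (D j k)) = (\<Sum>k<n. \<Sum>j<n. \<Sum>i<n. tCC (sC (F k i) (D i j)) (D j k))"
    unfolding G_def by (simp add: tCC_suml)
  have d3: "(\<Sum>k<n. \<Sum>j<n. tCC (G k j) (D j k)) = (\<Sum>k<n. \<Sum>i<n. tCC (D k i) (G i k))"
  proof -
    have "(\<Sum>k<n. \<Sum>j<n. tCC (G k j) (D j k)) = (\<Sum>k<n. \<Sum>j<n. tCC (\<Sum>i<n. sC (F i j) (D k i)) (D j k))"
      unfolding G_def by (rule sum.cong[OF refl]) (simp add: FD)
    also have "\<dots> = (\<Sum>k<n. \<Sum>j<n. \<Sum>i<n. tCC (D k i) (sC (F i j) (D j k)))"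
      by (simp add: tCC_suml tCC_scl tCC_scr)
    also have "\<dots> = (\<Sum>k<n. \<Sum>i<n. \<Sum>j<n. tCC (D k i) (sC (F i j) (D j k)))"
      by (rule sum.cong[OF refl], rule sum.swap)
    also have "\<dots> = (\<Sum>k<n. \<Sum>i<n. tCC (D k i) (G i k))"
      unfolding G_def by (simp add: tCC_sumr)
    finally show ?thesis .
  qed
  have d4: "tswap sCC tCC (\<Sum>k<n. \<Sum>j<n. tCC (G k j) (D j k)) = (\<Sum>k<n. \<Sum>i<n. tCC (D k i) (G i k))"
  proof -
    have "tswap sCC tCC (\<Sum>k<n. \<Sum>j<n. tCC (G k j) (D j k)) = (\<Sum>k<n. \<Sum>j<n. tCC (D j k) (G k j))"
      by (simp add: module_hom.sum[OF tswap_prop(1)[OF TCC]] tswap_prop(2)[OF TCC])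
    also have "\<dots> = (\<Sum>k<n. \<Sum>i<n. tCC (D k i) (G i k))" by (rule sum.swap)
    finally show ?thesis .
  qed
  have "\<Delta> (\<Sum>i<n. LL sMC tMC sC (\<phi> i) (\<rho> (f (e i)))) = (\<Sum>k<n. \<Sum>j<n. tCC (G k j) (D j k))"
    unfolding trf d1 d2 by (rule X1)
  then show ?thesis using d3 d4 by simp
qed

theorem proposition2p20:
  fixes sC :: "'k::comm_ring_1 \<Rightarrow> 'c::ab_group_add \<Rightarrow> 'c"
    and sCC :: "'k \<Rightarrow> 'cc::ab_group_add \<Rightarrow> 'cc" and tCC :: "'c \<Rightarrow> 'c \<Rightarrow> 'cc"
    and sCC_C :: "'k \<Rightarrow> 'cc_c::ab_group_add \<Rightarrow> 'cc_c" and tCC_C :: "'cc \<Rightarrow> 'c \<Rightarrow> 'cc_c"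
    and sC_CC :: "'k \<Rightarrow> 'c_cc::ab_group_add \<Rightarrow> 'c_cc" and tC_CC :: "'c \<Rightarrow> 'cc \<Rightarrow> 'c_cc"
    and \<Delta> :: "'c \<Rightarrow> 'cc" and \<epsilon> :: "'c \<Rightarrow> 'k"
    and sM :: "'k \<Rightarrow> 'm::ab_group_add \<Rightarrow> 'm"
    and sMC :: "'k \<Rightarrow> 'mc::ab_group_add \<Rightarrow> 'mc" and tMC :: "'m \<Rightarrow> 'c \<Rightarrow> 'mc"
    and sMC_C :: "'k \<Rightarrow> 'mc_c::ab_group_add \<Rightarrow> 'mc_c" and tMC_C :: "'mc \<Rightarrow> 'c \<Rightarrow> 'mc_c"
    and sM_CC :: "'k \<Rightarrow> 'm_cc::ab_group_add \<Rightarrow> 'm_cc" and tM_CC :: "'m \<Rightarrow> 'cc \<Rightarrow> 'm_cc"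
    and \<rho> :: "'m \<Rightarrow> 'mc"
  assumes k: "gldim_zero TYPE('k)"
    and C: "coalgebra sC sCC tCC sCC_C tCC_C sC_CC tC_CC \<Delta> \<epsilon>"
    and M: "right_comodule sC sCC tCC \<Delta> \<epsilon> sM sMC tMC sMC_C tMC_C sM_CC tM_CC \<rho>"
    and fg: "finitely_generated sM"
  shows "(\<forall>f g. colinear sM sMC tMC \<rho> f \<and> colinear sM sMC tMC \<rho> g \<longrightarrow>
            trC sM sMC tMC sC \<rho> (\<lambda>m. f m + g m)
              = trC sM sMC tMC sC \<rho> f + trC sM sMC tMC sC \<rho> g)
       \<and> (\<forall>a f. colinear sM sMC tMC \<rho> f \<longrightarrow>
            trC sM sMC tMC sC \<rho> (\<lambda>m. sM a (f m)) = sC a (trC sM sMC tMC sC \<rho> f))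
       \<and> (\<forall>f. colinear sM sMC tMC \<rho> f \<longrightarrow>
            \<Delta> (trC sM sMC tMC sC \<rho> f) = tswap sCC tCC (\<Delta> (trC sM sMC tMC sC \<rho> f))
            \<and> trC sM sMC tMC sC \<rho> f \<in> coHH0 sCC tCC \<Delta>)"
proof -
  have TCC: "is_tensor sC sC sCC tCC" and Dh: "module_hom sC sCC \<Delta>"
    using C unfolding coalgebra_def by blast+
  have TMC: "is_tensor sM sC sMC tMC" and TMCC: "is_tensor sMC sC sMC_C tMC_C"
    and TMCC2: "is_tensor sM sCC sM_CC tM_CC" and rh: "module_hom sM sMC \<rho>"
    and coassoc: "\<And>m. tassoc sMC_C tMC_C sMC tMC sM_CC tM_CC tCC
            (tlift sMC tMC sMC_C (\<lambda>x y. tMC_C (\<rho> x) y) (\<rho> m))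
          = tlift sMC tMC sM_CC (\<lambda>x y. tM_CC x (\<Delta> y)) (\<rho> m)"
    using M unfolding right_comodule_def by blast+
  note mM = tensor_mods(1)[OF TMC] and mC = tensor_mods(2)[OF TMC] and mMC = tensor_mods(3)[OF TMC]
  obtain n e \<phi> where db: "dual_basis sM n e \<phi>" using db_exists[OF mM k fg] by blast
  have tr: "trC sM sMC tMC sC \<rho> f = (\<Sum>i<n. LL sMC tMC sC (\<phi> i) (\<rho> (f (e i))))"
    if fh: "module_hom sM sM f" for f
  proof -
    have "module_hom sM sMC (\<lambda>m. \<rho> (f m))" using module_hom_compose[OF fh rh] by (simp add: o_def)
    then show ?thesis unfolding trC_def by (rule trace_eq[OF TMC db])
  qed
  have Lh: "module_hom sMC sC (LL sMC tMC sC (\<phi> i))" if "i < n" for i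
    by (rule LL_prop(1)[OF TMC db_hom[OF db that]])
  have colh: "module_hom sM sM f" if "colinear sM sMC tMC \<rho> f" for f
    using that unfolding colinear_def by blast
  have P1: "trC sM sMC tMC sC \<rho> (\<lambda>m. f m + g m) = trC sM sMC tMC sC \<rho> f + trC sM sMC tMC sC \<rho> g"
    if "colinear sM sMC tMC \<rho> f" "colinear sM sMC tMC \<rho> g" for f g
  proof -
    have fh: "module_hom sM sM f" and gh: "module_hom sM sM g" using colh that by blast+
    have fgh: "module_hom sM sM (\<lambda>m. f m + g m)"
      by (rule module_pair.module_hom_add[OF module_pair.intro[OF mM mM] fh gh])
    show ?thesis unfolding tr[OF fgh] tr[OF fh] tr[OF gh]
      by (simp add: sum.distrib[symmetric] module_hom.add[OF rh] module_hom.add[OF Lh])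
  qed
  have P2: "trC sM sMC tMC sC \<rho> (\<lambda>m. sM a (f m)) = sC a (trC sM sMC tMC sC \<rho> f)"
    if "colinear sM sMC tMC \<rho> f" for a f
  proof -
    have fh: "module_hom sM sM f" using colh that by blast
    have fah: "module_hom sM sM (\<lambda>m. sM a (f m))"
      by (rule module_pair.module_hom_scale[OF module_pair.intro[OF mM mM] fh])
    show ?thesis unfolding tr[OF fah] tr[OF fh]
      by (simp add: module.scale_sum_right[OF mC] module_hom.scale[OF rh] module_hom.scale[OF Lh])
  qed
  have P3: "\<Delta> (trC sM sMC tMC sC \<rho> f) = tswap sCC tCC (\<Delta> (trC sM sMC tMC sC \<rho> f))"
    if "colinear sM sMC tMC \<rho> f" for f
  proof -
    have fh: "module_hom sM sM f" and fcol: "\<And>m. \<rho> (f m) = tlift sMC tMC sMC (\<lambda>x c. tMC (f x) c) (\<rho> m)"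
      using that unfolding colinear_def by blast+
    show ?thesis unfolding tr[OF fh]
      by (rule main_sym[OF TCC Dh TMC TMCC TMCC2 rh coassoc db fh fcol])
  qed
  show ?thesis
  proof (intro conjI allI impI)
    fix f g assume "colinear sM sMC tMC \<rho> f \<and> colinear sM sMC tMC \<rho> g"
    then show "trC sM sMC tMC sC \<rho> (\<lambda>m. f m + g m) = trC sM sMC tMC sC \<rho> f + trC sM sMC tMC sC \<rho> g"
      using P1 by blast
  next
    fix a f assume "colinear sM sMC tMC \<rho> f"
    then show "trC sM sMC tMC sC \<rho> (\<lambda>m. sM a (f m)) = sC a (trC sM sMC tMC sC \<rho> f)" by (rule P2)
  next
    fix f assume "colinear sM sMC tMC \<rho> f"
    then show "\<Delta> (trC sM sMC tMC sC \<rho> f) = tswap sCC tCC (\<Delta> (trC sM sMC tMC sC \<rho> f))" by (rule P3)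
  next
    fix f assume "colinear sM sMC tMC \<rho> f"
    then show "trC sM sMC tMC sC \<rho> f \<in> coHH0 sCC tCC \<Delta>" unfolding coHH0_def using P3 by simp
  qed
qed

end
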